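(* Let $S_1,S_2$ be two non-empty intervals of extended $\mathbb Z$-segments with $\mathrm{Supp}(S_1)=\mathrm{Supp}(S_2)$. Then: (a) $S_1\cap S_2$ is an interval; (b) there are at most $3$ intervals that are adjacent to $S_1$; (c) if $|S_1|>1$, $|S_2|>1$, $|S_1\cap S_2|=1$, and there exists an interval $S_1'$ adjacent to $S_1$ with $|S_1'\cap S_2|>0$, then $|S_1'\cap S_2|=2$.
   Context: A $\mathbb Z$-segment is $[A,B]=\{A,A-1,\dots,B\}$ with $A\ge B$ integers; its length is $b=A-B+1$. A virtual extended $\mathbb Z$-segment is a triple $([A,B],l,\eta)$ with $l\in\mathbb Z$, $l\le b/2$, and $\eta\in\{\pm1\}$, where if $b=2l$ the values $\eta$ and $-\eta$ are identified (otherwise not). It is an extended $\mathbb Z$-segment if moreover $l\ge0$. Its support is $\mathrm{Supp}=[A,B]$. Two virtual extended $\mathbb Z$-segments $([A_i,B_i],l_i,\eta_i)$ are adjacent if they have the same support and either there are lifts with $\eta_1=\eta_2$ and $|l_1-l_2|=1$, or $b$ is odd, $l_1=l_2=(b-1)/2$ and $\eta_1=-\eta_2$. A virtual interval is a finite set $\{\mathfrak e_1,\dots,\mathfrak e_r\}$ ($r\ge0$) of pairwise distinct virtual extended $\mathbb Z$-segments with $\mathfrak e_i$ adjacent to $\mathfrak e_{i+1}$ for all $i$; its support is the common support; an interval is a virtual interval consisting of extended $\mathbb Z$-segments. Two non-empty virtual intervals $S_1,S_2$ are adjacent if $S_1\cup S_2$ is a virtual interval and $|S_1|+1=|S_1\cup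 S_2|=|S_2|+1$. Two intervals $S_1,S_2$ are adjacent if there exist virtual intervals $S_1^+,S_2^+$ that are adjacent and satisfy $S_i=S_i^+\cap\{\text{extended }\mathbb Z\text{-segments}\}$. *)

theory Defs
  imports Main
begin

text \<open>The identification of eta and -eta when b = 2l is handled by choosing the
  canonical representative eta = 1 in that case (see vseg_valid).\<close>

datatype vseg = VSeg (segA: int) (segB: int) (segl: int) (segeta: int)

definition seg_len :: "vseg \<Rightarrow> int" where
  "seg_len e = segA e - segB e + 1"

definition seg_supp :: "vseg \<Rightarrow> int \<times> int" where
  "seg_supp e = (segA e, segB e)"

definition vseg_valid :: "vseg \<Rightarrow> bool" where
  "vseg_valid e \<longleftrightarrow> segA e \<ge> segB e \<and> 2 * segl e \<le> seg_len e
     \<and> segeta e \<in> {1, -1} \<and> (seg_len e = 2 * segl e \<longrightarrow> segeta e = 1)"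

definition eseg :: "vseg \<Rightarrow> bool" where
  "eseg e \<longleftrightarrow> vseg_valid e \<and> segl e \<ge> 0"

definition eta_lifts :: "vseg \<Rightarrow> int set" where
  "eta_lifts e = (if seg_len e = 2 * segl e then {1, -1} else {segeta e})"

definition vadj :: "vseg \<Rightarrow> vseg \<Rightarrow> bool" where
  "vadj e1 e2 \<longleftrightarrow> seg_supp e1 = seg_supp e2 \<and>
     (((\<exists>\<eta>\<in>eta_lifts e1. \<eta> \<in> eta_lifts e2) \<and> \<bar>segl e1 - segl e2\<bar> = 1)
      \<or> (odd (seg_len e1) \<and> 2 * segl e1 = seg_len e1 - 1 \<and> 2 * segl e2 = seg_len e1 - 1
          \<and> segeta e1 = - segeta e2))"

definition virtual_interval :: "vseg set \<Rightarrow> bool" where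
  "virtual_interval S \<longleftrightarrow> (\<forall>e\<in>S. vseg_valid e) \<and>
     (\<exists>xs. distinct xs \<and> set xs = S \<and> successively vadj xs)"

definition interval :: "vseg set \<Rightarrow> bool" where
  "interval S \<longleftrightarrow> virtual_interval S \<and> (\<forall>e\<in>S. eseg e)"

definition Supp :: "vseg set \<Rightarrow> int \<times> int" where
  "Supp S = (THE p. \<forall>e\<in>S. seg_supp e = p)"

definition vint_adj :: "vseg set \<Rightarrow> vseg set \<Rightarrow> bool" where
  "vint_adj S1 S2 \<longleftrightarrow> S1 \<noteq> {} \<and> S2 \<noteq> {} \<and> virtual_interval S1 \<and> virtual_interval S2
     \<and> virtual_interval (S1 \<union> S2)
     \<and> card S1 + 1 = card (S1 \<union> S2) \<and> card (S1 \<union> S2) = card S2 + 1"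

definition int_adj :: "vseg set \<Rightarrow> vseg set \<Rightarrow> bool" where
  "int_adj S1 S2 \<longleftrightarrow> interval S1 \<and> interval S2 \<and>
     (\<exists>T1 T2. vint_adj T1 T2 \<and> S1 = T1 \<inter> Collect eseg \<and> S2 = T2 \<inter> Collect eseg)"

end

theory Submission
  imports Defs
begin


definition E :: "int \<Rightarrow> int \<Rightarrow> int \<Rightarrow> vseg" where
  "E A B p = (if 2*p \<le> A-B+1 then VSeg A B p 1 else VSeg A B (A-B+1-p) (-1))"
definition pos :: "vseg \<Rightarrow> int" where
  "pos e = (if segeta e = 1 then segl e else seg_len e - segl e)"

lemma E_sel[simp]: "segA (E A B p) = A" "segB (E A B p) = B"
  by (auto simp: E_def)

lemma E_supp[simp]: "seg_supp (E A B p) = (A,B)"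
  by (simp add: seg_supp_def)

lemma E_inj: "inj (E A B)"
  by (rule injI) (auto simp: E_def split: if_splits)

lemma E_valid: "B \<le> A \<Longrightarrow> vseg_valid (E A B p)"
  by (auto simp: E_def vseg_valid_def seg_len_def)

lemma E_eseg: "B \<le> A \<Longrightarrow> eseg (E A B p) \<longleftrightarrow> 0 \<le> p \<and> p \<le> A-B+1"
  by (auto simp: E_def eseg_def vseg_valid_def seg_len_def)

lemma E_adj: "B \<le> A \<Longrightarrow> vadj (E A B p) (E A B q) \<longleftrightarrow> \<bar>p-q\<bar> = 1"
  unfolding vadj_def E_def eta_lifts_def seg_len_def
  by (auto split: if_splits simp: seg_supp_def; presburger)

lemma valid_E: "vseg_valid e \<Longrightarrow> e = E (segA e) (segB e) (pos e)"
  by (cases e) (auto simp: E_def pos_def vseg_valid_def seg_len_def)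

lemma vadj_supp: "vadj e1 e2 \<Longrightarrow> seg_supp e1 = seg_supp e2"
  by (simp add: vadj_def)


lemma walk_Icc: "successively (\<lambda>a b. \<bar>a-b\<bar> = (1::int)) ys \<Longrightarrow> ys \<noteq> [] \<Longrightarrow>
   \<exists>m n. m \<le> n \<and> set ys = {m..n}"
proof (induction ys)
  case Nil then show ?case by simp
next
  case (Cons y ys)
  show ?case
  proof (cases ys)
    case Nil then show ?thesis by (intro exI[of _ y]) auto
  next
    case (Cons z zs)
    with Cons.prems have h: "\<bar>y - z\<bar> = 1" "successively (\<lambda>a b. \<bar>a-b\<bar> = (1::int)) ys" by auto
    with Cons.IH Cons obtain m n where mn: "m \<le> n" "set ys = {m..n}" by auto
    have "z \<in> set ys" using Cons by simp
    then have z: "m \<le> z" "z \<le> n" using mn by auto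
    have "set (y # ys) = {min y m..max y n}"
    proof (rule set_eqI)
      fix t show "t \<in> set (y # ys) \<longleftrightarrow> t \<in> {min y m..max y n}"
        using mn(2) z h(1) by (simp only: list.set insert_iff atLeastAtMost_iff) linarith
    qed
    then show ?thesis by (intro exI[of _ "min y m"] exI[of _ "max y n"]) auto
  qed
qed


lemma upto_succ: "successively (\<lambda>a b. \<bar>a-b\<bar> = (1::int)) [m..n]"
proof (induction m n rule: upto.induct)
  case (1 i j)
  show ?case
  proof (cases "i + 1 \<le> j")
    case True
    then have a: "[i..j] = i # [i+1..j]" by (simp add: upto_rec1[of i j])
    have b: "[i+1..j] \<noteq> [] \<and> hd [i+1..j] = i+1" using True by (simp add: upto_rec1[of "i+1" j])
    have "successively (\<lambda>a b. \<bar>a-b\<bar> = (1::int)) [i+1..j]" using 1 True by simp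
    then show ?thesis unfolding a successively_Cons using b by simp
  next
    case False
    then show ?thesis by (cases "i \<le> j") (simp_all add: upto_rec1)
  qed
qed


lemma succ_eq_hd: "successively (\<lambda>a b. f a = f b) xs \<Longrightarrow> x \<in> set xs \<Longrightarrow> f x = f (hd xs)"
proof (induction xs arbitrary: x rule: induct_list012)
  case (3 a b zs)
  have h: "f a = f b" "successively (\<lambda>a b. f a = f b) (b#zs)"
    using "3.prems"(1) unfolding successively.simps(3) by blast+
  have "x = a \<or> x \<in> set (b#zs)" using "3.prems"(2) by simp
  then show ?case
  proof
    assume "x \<in> set (b#zs)"
    then have "f x = f b" using "3.IH"(2)[OF h(2)] by (metis list.sel(1))
    then show ?thesis using h(1) by (metis list.sel(1))
  qed simp
qed auto

lemma supp_same: "successively (\<lambda>a b. seg_supp a = seg_supp b) xs \<Longrightarrow> a \<in> set xs \<Longrightarrow> b \<in> set xs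
  \<Longrightarrow> seg_supp a = seg_supp b"
  using succ_eq_hd[of seg_supp xs a] succ_eq_hd[of seg_supp xs b] by simp

lemma VI_fwd: assumes "virtual_interval T" "e \<in> T"
  shows "segB e \<le> segA e \<and> (\<exists>m n. m \<le> n \<and> T = E (segA e) (segB e) ` {m..n})"
proof -
  obtain xs where xs: "distinct xs" "set xs = T" "successively vadj xs" and val: "\<forall>e\<in>T. vseg_valid e"
    using assms unfolding virtual_interval_def by auto
  have s1: "successively (\<lambda>a b. seg_supp a = seg_supp b) xs"
    using xs(3) by (rule successively_mono) (rule vadj_supp)
  have sup: "\<And>e'. e' \<in> T \<Longrightarrow> seg_supp e' = seg_supp e"
    using supp_same[OF s1] xs(2) assms(2) by blast
  have AB: "segB e \<le> segA e" using val assms(2) by (auto simp: vseg_valid_def)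
  let ?E = "E (segA e) (segB e)"
  have eq: "\<And>e'. e' \<in> T \<Longrightarrow> e' = ?E (pos e')"
    using sup val valid_E by (metis prod.inject seg_supp_def)
  have "successively (\<lambda>a b. \<bar>a-b\<bar> = (1::int)) (map pos xs)"
    unfolding successively_map
  proof (rule successively_mono[OF xs(3)])
    fix a b assume "vadj a b" "a \<in> set xs" "b \<in> set xs"
    then show "\<bar>pos a - pos b\<bar> = 1"
      using eq[of a] eq[of b] xs(2) E_adj[OF AB] by metis
  qed
  moreover have "map pos xs \<noteq> []" using xs(2) assms(2) by auto
  ultimately obtain m n where "m \<le> n" "set (map pos xs) = {m..n}" using walk_Icc by blast
  moreover have "T = ?E ` set (map pos xs)" using eq xs(2) by force
  ultimately show ?thesis using AB by auto
qed

lemma VI_bwd: assumes "B \<le> A" shows "virtual_interval (E A B ` {m..n})"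
  unfolding virtual_interval_def
proof (intro conjI ballI exI)
  show "distinct (map (E A B) [m..n])" using E_inj by (simp add: distinct_map inj_on_def inj_def)
  show "set (map (E A B) [m..n]) = E A B ` {m..n}" by simp
  show "successively vadj (map (E A B) [m..n])"
    unfolding successively_map using upto_succ
    by (rule successively_mono) (simp add: E_adj[OF assms])
qed (use E_valid assms in auto)



lemma Supp_E: "I \<noteq> {} \<Longrightarrow> Supp (E A B ` I) = (A,B)"
  unfolding Supp_def by (rule the_equality) auto

lemma E_Int_eseg: "B \<le> A \<Longrightarrow> E A B ` I \<inter> Collect eseg = E A B ` (I \<inter> {0..A-B+1})"
  using E_eseg by auto

lemma E_img_eq: "E A B ` I = E A B ` J \<longleftrightarrow> I = J"
  using E_inj by (simp add: inj_image_eq_iff)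

lemma E_img_Int: "E A B ` I \<inter> E A B ` J = E A B ` (I \<inter> J)"
  using E_inj by (simp add: image_Int)

lemma E_card: "card (E A B ` I) = card I"
  using E_inj by (simp add: card_image inj_on_def inj_def)

lemma interval_E: "B \<le> A \<Longrightarrow> 0 \<le> m \<Longrightarrow> n \<le> A-B+1 \<Longrightarrow> interval (E A B ` {m..n})"
  unfolding interval_def using VI_bwd E_eseg by auto

lemma interval_fwd: assumes "interval S" "e \<in> S"
  shows "segB e \<le> segA e \<and> (\<exists>x y. x \<le> y \<and> 0 \<le> x \<and> y \<le> segA e - segB e + 1 \<and> S = E (segA e) (segB e) ` {x..y})"
proof -
  obtain x y where xy: "x \<le> y" "S = E (segA e) (segB e) ` {x..y}" and AB: "segB e \<le> segA e"
    using VI_fwd assms unfolding interval_def by blast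
  have "eseg (E (segA e) (segB e) x)" "eseg (E (segA e) (segB e) y)"
    using assms(1) xy unfolding interval_def by auto
  then show ?thesis using E_eseg[OF AB] xy AB by auto
qed

lemma IL: fixes m1 n1 m2 n2 m n :: int
  assumes "m1 \<le> n1" "m2 \<le> n2" "{m1..n1} \<union> {m2..n2} = {m..n}"
    "card {m1..n1} + 1 = card {m..n}" "card {m..n} = card {m2..n2} + 1"
  shows "(m2 = m1+1 \<and> n2 = n1+1) \<or> (m2 = m1-1 \<and> n2 = n1-1)"
proof -
  have s: "m \<le> m1" "n1 \<le> n" "m \<le> m2" "n2 \<le> n" using assms(1-3)
    by (metis atLeastAtMost_iff atLeastatMost_subset_iff sup.cobounded1 sup.cobounded2)+
  have mn: "m \<le> n" using s assms(1) by linarith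
  have "m \<in> {m1..n1} \<union> {m2..n2}" "n \<in> {m1..n1} \<union> {m2..n2}" using assms(3) mn by auto
  then have e: "m1 \<le> m \<or> m2 \<le> m" "n \<le> n1 \<or> n \<le> n2" by auto
  have "n1 - m1 = n - m - 1" "n2 - m2 = n - m - 1" using assms(1,2,4,5) mn by auto
  then show ?thesis using s e by linarith
qed

lemma adj_char:
  assumes AB: "B \<le> A" and xy: "0 \<le> x" "x \<le> y" "y \<le> A-B+1"
    and S1: "S1 = E A B ` {x..y}" and adj: "int_adj S1 S"
  shows "\<exists>K. S = E A B ` K \<and> (K = {x+1..min (y+1) (A-B+1)} \<or> (x = 0 \<and> K = {0..min (y+1) (A-B+1)})
     \<or> K = {max (x-1) 0..y-1} \<or> (y = A-B+1 \<and> K = {max (x-1) 0..A-B+1}))"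
proof -
  define b where "b = A-B+1"
  obtain T1 T2 where T: "vint_adj T1 T2" "S1 = T1 \<inter> Collect eseg" "S = T2 \<inter> Collect eseg"
    using adj unfolding int_adj_def by blast
  have vi: "virtual_interval T1" "virtual_interval T2" "virtual_interval (T1 \<union> T2)"
    "card T1 + 1 = card (T1 \<union> T2)" "card (T1 \<union> T2) = card T2 + 1" "T2 \<noteq> {}"
    using T(1) unfolding vint_adj_def by auto
  have ex: "E A B x \<in> T1" using T(2) S1 xy by auto
  obtain m1 n1 where P1: "m1 \<le> n1" "T1 = E A B ` {m1..n1}"
    using VI_fwd[OF vi(1) ex] by auto
  obtain m n where P: "m \<le> n" "T1 \<union> T2 = E A B ` {m..n}"
    using VI_fwd[OF vi(3), of "E A B x"] ex by auto
  obtain e' where e': "e' \<in> T2" using vi(6) by auto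
  then obtain q where "e' = E A B q" using P by auto
  then obtain m2 n2 where P2: "m2 \<le> n2" "T2 = E A B ` {m2..n2}"
    using VI_fwd[OF vi(2) e'] by auto
  have u: "{m1..n1} \<union> {m2..n2} = {m..n}"
    using P(2) unfolding P1(2) P2(2) image_Un[symmetric] E_img_eq .
  have c: "card {m1..n1} + 1 = card {m..n}" "card {m..n} = card {m2..n2} + 1"
    using vi(4,5) unfolding P(2) unfolding P1(2) P2(2) E_card by auto
  have sh: "(m2 = m1+1 \<and> n2 = n1+1) \<or> (m2 = m1-1 \<and> n2 = n1-1)"
    using IL[OF P1(1) P2(1) u c] .
  have "E A B ` {x..y} = E A B ` ({m1..n1} \<inter> {0..b})"
    using T(2) S1 P1(2) E_Int_eseg[OF AB] b_def by simp
  then have "{x..y} = {max m1 0..min n1 b}" unfolding E_img_eq by simp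
  then have xy': "x = max m1 0" "y = min n1 b" using xy by (simp_all add: Icc_eq_Icc)
  have S: "S = E A B ` {max m2 0..min n2 b}"
    using T(3) P2(2) E_Int_eseg[OF AB] b_def by simp
  show ?thesis
  proof (intro exI conjI)
    show "S = E A B ` {max m2 0..min n2 b}" by (rule S)
    show "{max m2 0..min n2 b} = {x + 1..min (y + 1) (A - B + 1)} \<or>
      x = 0 \<and> {max m2 0..min n2 b} = {0..min (y + 1) (A - B + 1)} \<or>
      {max m2 0..min n2 b} = {max (x - 1) 0..y - 1} \<or>
      y = A - B + 1 \<and> {max m2 0..min n2 b} = {max (x - 1) 0..A - B + 1}"
    proof (cases "m2 = m1+1 \<and> n2 = n1+1")
      case True
      show ?thesis
      proof (cases "m1 \<ge> 0")
        case True
        then have "max m2 0 = x + 1" "min n2 b = min (y + 1) (A - B + 1)"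
          using \<open>m2 = m1+1 \<and> n2 = n1+1\<close> xy' b_def by auto
        then show ?thesis by simp
      next
        case False
        then have "max m2 0 = 0" "x = 0" "min n2 b = min (y + 1) (A - B + 1)"
          using \<open>m2 = m1+1 \<and> n2 = n1+1\<close> xy' b_def by auto
        then show ?thesis by simp
      qed
    next
      case False
      then have h: "m2 = m1-1" "n2 = n1-1" using sh by auto
      have lo: "max m2 0 = max (x-1) 0" using h xy' by auto
      show ?thesis
      proof (cases "n1 \<le> b")
        case True
        then have "min n2 b = y - 1" using h xy' by auto
        then show ?thesis using lo by simp
      next
        case False
        then have "min n2 b = A-B+1" "y = A-B+1" using h xy' b_def by auto
        then show ?thesis using lo by simp
      qed
    qed
  qed
qed



theorem lemma4p5:
  assumes "interval S1" and "interval S2" and "S1 \<noteq> {}" and "S2 \<noteq> {}"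
    and "Supp S1 = Supp S2"
  shows "interval (S1 \<inter> S2)
    \<and> (finite {S. int_adj S1 S} \<and> card {S. int_adj S1 S} \<le> 3)
    \<and> (card S1 > 1 \<and> card S2 > 1 \<and> card (S1 \<inter> S2) = 1 \<longrightarrow>
        (\<forall>S1'. int_adj S1 S1' \<and> card (S1' \<inter> S2) > 0 \<longrightarrow> card (S1' \<inter> S2) = 2))"
proof -
  obtain e1 where e1: "e1 \<in> S1" using assms(3) by auto
  obtain e2 where e2: "e2 \<in> S2" using assms(4) by auto
  define A where "A = segA e1"
  define B where "B = segB e1"
  define b where "b = A - B + 1"
  obtain x y where AB: "B \<le> A" and xy: "x \<le> y" "0 \<le> x" "y \<le> b" and S1: "S1 = E A B ` {x..y}"
    using interval_fwd[OF assms(1) e1] A_def B_def b_def by auto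
  obtain u v where uv: "u \<le> v" "0 \<le> u" "v \<le> segA e2 - segB e2 + 1"
     and S2': "S2 = E (segA e2) (segB e2) ` {u..v}"
    using interval_fwd[OF assms(2) e2] by auto
  have "(A,B) = (segA e2, segB e2)"
    using assms(5) unfolding S1 S2' using xy uv by (simp add: Supp_E)
  then have S2: "S2 = E A B ` {u..v}" and uvb: "v \<le> b" using S2' uv b_def by auto
  have I: "S1 \<inter> S2 = E A B ` {max x u..min y v}"
    unfolding S1 S2 E_img_Int by simp
  have a: "interval (S1 \<inter> S2)"
    unfolding I using interval_E[OF AB] xy uv uvb b_def by simp
  define K1 where "K1 = {x+1..min (y+1) b}"
  define K3 where "K3 = {max (x-1) 0..y-1}"
  define K5 where "K5 = (if x = 0 then {0..min (y+1) b} else {max (x-1) 0..b})"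
  have sub: "{S. int_adj S1 S} \<subseteq> (\<lambda>K. E A B ` K) ` {K1, K3, K5}"
  proof
    fix S assume "S \<in> {S. int_adj S1 S}"
    then obtain K where K: "S = E A B ` K" "K = {x+1..min (y+1) b} \<or> (x = 0 \<and> K = {0..min (y+1) b})
     \<or> K = {max (x-1) 0..y-1} \<or> (y = b \<and> K = {max (x-1) 0..b})"
      using adj_char[OF AB xy(2) xy(1) _ S1] xy b_def by auto
    have "K \<in> {K1, K3, K5}"
    proof -
      have "x = 0 \<Longrightarrow> y = b \<Longrightarrow> {max (x-1) 0..b} = {0..min (y+1) b}" by simp
      then show ?thesis using K(2) unfolding K1_def K3_def K5_def by auto
    qed
    then show "S \<in> (\<lambda>K. E A B ` K) ` {K1, K3, K5}" using K(1) by auto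
  qed
  have fin: "finite {S. int_adj S1 S}" using finite_subset[OF sub] by simp
  have "card {S. int_adj S1 S} \<le> card ((\<lambda>K. E A B ` K) ` {K1, K3, K5})"
    using card_mono[OF _ sub] by simp
  also have "\<dots> \<le> card {K1, K3, K5}" by (rule card_image_le) simp
  also have "\<dots> \<le> 3" by (simp add: card_insert_if)
  finally have bb: "card {S. int_adj S1 S} \<le> 3" .
  have c: "card S1 > 1 \<and> card S2 > 1 \<and> card (S1 \<inter> S2) = 1 \<longrightarrow>
        (\<forall>S1'. int_adj S1 S1' \<and> card (S1' \<inter> S2) > 0 \<longrightarrow> card (S1' \<inter> S2) = 2)"
  proof (intro impI allI)
    fix S1' assume h: "card S1 > 1 \<and> card S2 > 1 \<and> card (S1 \<inter> S2) = 1"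
      and h2: "int_adj S1 S1' \<and> card (S1' \<inter> S2) > 0"
    have "x < y" "u < v" using h unfolding S1 S2 E_card by auto
    moreover have "min y v - max x u = 0" using h unfolding I E_card by auto
    ultimately have yu: "y = u \<or> v = x" by linarith
    obtain K where K: "S1' = E A B ` K" "K = {x+1..min (y+1) b} \<or> (x = 0 \<and> K = {0..min (y+1) b})
     \<or> K = {max (x-1) 0..y-1} \<or> (y = b \<and> K = {max (x-1) 0..b})"
      using adj_char[OF AB xy(2) xy(1) _ S1] h2 xy b_def by auto
    have cK: "card (S1' \<inter> S2) = card (K \<inter> {u..v})"
      unfolding K(1) S2 E_img_Int E_card ..
    show "card (S1' \<inter> S2) = 2"
      using h2 K(2) yu \<open>x < y\<close> \<open>u < v\<close> xy uv uvb unfolding cK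
      by (auto simp: max_def min_def)
  qed
  show ?thesis using a fin bb c by blast
qed
end
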